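(* Let $\Omega\subseteq\mathbb{R}^2$ be a bounded, simply connected domain of class $C^1$, let $a_1,\ldots,a_p$ be distinct points in $\Omega$, and let $\{L_1,\ldots,L_q\}$ be a minimal connection for $\{a_1,\ldots,a_p\}$ relative to $\Omega$. If some $L_j$ has an endpoint $b_j\in\partial\Omega$, then $L_j$ is orthogonal to $\partial\Omega$ at $b_j$.
   Context: A connection for $\{a_1,\ldots,a_p\}$ relative to $\Omega$ is a finite collection $\{L_1,\ldots,L_q\}$ of closed non-degenerate straight line segments such that (i) each $L_j\subseteq\overline\Omega$; (ii) each $L_j$ either connects two of $a_1,\ldots,a_p$ or connects some $a_i$ with a point of $\partial\Omega$; (iii) each $a_i$ is an endpoint of an odd number of the $L_j$. A minimal connection relative to $\Omega$ is one minimising $\sum_j\mathcal{H}^1(L_j)$ among all connections relative to $\Omega$. *)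

theory Defs
  imports "HOL-Analysis.Analysis"
begin

definition C1_boundary :: "(real^2) set \<Rightarrow> bool" where
  "C1_boundary \<Omega> \<longleftrightarrow>
     (\<forall>b \<in> frontier \<Omega>. \<exists>r > 0. \<exists>e1 e2 :: real^2. \<exists>g :: real \<Rightarrow> real.
        norm e1 = 1 \<and> norm e2 = 1 \<and> e1 \<bullet> e2 = 0 \<and>
        g C1_differentiable_on UNIV \<and>
        \<Omega> \<inter> ball b r = {x \<in> ball b r. (x - b) \<bullet> e2 > g ((x - b) \<bullet> e1)})"

definition is_endpoint :: "real^2 \<Rightarrow> (real^2) set \<Rightarrow> bool" where
  "is_endpoint x L \<longleftrightarrow> (\<exists>y. y \<noteq> x \<and> L = closed_segment x y)"

definition connection :: "(real^2) set \<Rightarrow> (real^2) set \<Rightarrow> (real^2) set set \<Rightarrow> bool" where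
  "connection \<Omega> A C \<longleftrightarrow>
     finite C \<and>
     (\<forall>L \<in> C. L \<subseteq> closure \<Omega> \<and>
        (\<exists>x y. x \<noteq> y \<and> L = closed_segment x y \<and> x \<in> A \<and> (y \<in> A \<or> y \<in> frontier \<Omega>))) \<and>
     (\<forall>a \<in> A. odd (card {L \<in> C. is_endpoint a L}))"

text \<open>Total length: for a segment, the 1-dimensional Hausdorff measure equals its diameter.\<close>
definition conn_length :: "(real^2) set set \<Rightarrow> real" where
  "conn_length C = (\<Sum>L\<in>C. diameter L)"

definition minimal_connection :: "(real^2) set \<Rightarrow> (real^2) set \<Rightarrow> (real^2) set set \<Rightarrow> bool" where
  "minimal_connection \<Omega> A C \<longleftrightarrow>
     connection \<Omega> A C \<and> (\<forall>C'. connection \<Omega> A C' \<longrightarrow> conn_length C \<le> conn_length C')"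

definition orthogonal_to_boundary_at ::
  "(real^2) set \<Rightarrow> real^2 \<Rightarrow> real^2 \<Rightarrow> bool" where
  "orthogonal_to_boundary_at \<Omega> b x \<longleftrightarrow>
     (\<forall>\<gamma> :: real \<Rightarrow> real^2. \<forall>v.
        \<gamma> 0 = b \<longrightarrow> (\<forall>\<^sub>F t in nhds 0. \<gamma> t \<in> frontier \<Omega>) \<longrightarrow>
        (\<gamma> has_vector_derivative v) (at 0) \<longrightarrow> (x - b) \<bullet> v = 0)"

end

theory Submission
  imports Defs
begin

lemma diam_seg:
  fixes a b :: "real^2"
  shows "diameter (closed_segment a b) = dist a b"
proof (rule antisym)
  show "diameter (closed_segment a b) \<le> dist a b"
  proof (rule diameter_le)
    show "closed_segment a b \<noteq> {} \<or> 0 \<le> dist a b" by simp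
    fix x y assume x: "x \<in> closed_segment a b" and y: "y \<in> closed_segment a b"
    obtain s where s: "x = (1 - s) *\<^sub>R a + s *\<^sub>R b" "0 \<le> s" "s \<le> 1"
      using x by (auto simp: closed_segment_def)
    obtain t where t: "y = (1 - t) *\<^sub>R a + t *\<^sub>R b" "0 \<le> t" "t \<le> 1"
      using y by (auto simp: closed_segment_def)
    have "x - y = (s - t) *\<^sub>R (b - a)" unfolding s(1) t(1) by (simp add: algebra_simps)
    then have "norm (x - y) = \<bar>s - t\<bar> * norm (b - a)" by simp
    also have "\<dots> \<le> 1 * norm (b - a)"
      using s t by (intro mult_right_mono) auto
    finally show "norm (x - y) \<le> dist a b" by (simp add: dist_norm norm_minus_commute)
  qed
  show "dist a b \<le> diameter (closed_segment a b)"
    by (rule diameter_bounded_bound) (auto simp: bounded_closed_segment)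
qed

lemma endpoint_iff:
  fixes u w p :: "real^2"
  assumes "u \<noteq> w"
  shows "is_endpoint p (closed_segment u w) \<longleftrightarrow> p = u \<or> p = w"
  using assms unfolding is_endpoint_def
  by (auto simp: doubleton_eq_iff)

lemma deriv_sq:
  fixes \<gamma> :: "real \<Rightarrow> real^2"
  assumes "(\<gamma> has_vector_derivative v) (at 0)"
  shows "((\<lambda>t. (a - \<gamma> t) \<bullet> (a - \<gamma> t)) has_real_derivative (- 2 * ((a - \<gamma> 0) \<bullet> v))) (at 0)"
proof -
  have d: "((\<lambda>t. a - \<gamma> t) has_derivative (\<lambda>h. h *\<^sub>R (- v))) (at 0)"
    using assms unfolding has_vector_derivative_def
    by (auto intro!: derivative_eq_intros)
  have "((\<lambda>t. (a - \<gamma> t) \<bullet> (a - \<gamma> t)) has_derivative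
      (\<lambda>h. (a - \<gamma> 0) \<bullet> (h *\<^sub>R (- v)) + (h *\<^sub>R (- v)) \<bullet> (a - \<gamma> 0))) (at 0)"
    by (rule has_derivative_inner[OF d d])
  then show ?thesis
    unfolding has_field_derivative_def
    by (rule has_derivative_eq_rhs) (auto simp: inner_commute algebra_simps fun_eq_iff)
qed

theorem lemma1p5:
  fixes \<Omega> :: "(real^2) set" and A :: "(real^2) set" and C :: "(real^2) set set"
  assumes "open \<Omega>" and "connected \<Omega>" and "bounded \<Omega>" and "simply_connected \<Omega>"
    and "C1_boundary \<Omega>"
    and "finite A" and "A \<subseteq> \<Omega>"
    and "minimal_connection \<Omega> A C"
    and "L \<in> C" and "b \<in> frontier \<Omega>" and "is_endpoint b L"
  shows "\<exists>x. x \<noteq> b \<and> L = closed_segment b x \<and> orthogonal_to_boundary_at \<Omega> b x"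
proof -
  have op: "open \<Omega>" using assms(1) .
  have fr: "\<And>z. z \<in> frontier \<Omega> \<Longrightarrow> z \<notin> \<Omega>"
    using op by (simp add: frontier_def interior_open)
  have conn: "connection \<Omega> A C" and minC: "\<And>C'. connection \<Omega> A C' \<Longrightarrow> conn_length C \<le> conn_length C'"
    using assms(8) unfolding minimal_connection_def by auto
  have finC: "finite C" using conn unfolding connection_def by (rule conjunct1)
  have "\<forall>L \<in> C. L \<subseteq> closure \<Omega> \<and>
        (\<exists>x y. x \<noteq> y \<and> L = closed_segment x y \<and> x \<in> A \<and> (y \<in> A \<or> y \<in> frontier \<Omega>))"
    using conn unfolding connection_def by (elim conjE)
  then obtain x0 y0 where xy: "x0 \<noteq> y0" "L = closed_segment x0 y0" "x0 \<in> A" "y0 \<in> A \<or> y0 \<in> frontier \<Omega>"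
    using assms(9) by blast
  obtain y where y: "y \<noteq> b" "L = closed_segment b y"
    using assms(11) unfolding is_endpoint_def by blast
  have x0O: "x0 \<in> \<Omega>" using xy(3) assms(7) by blast
  have bO: "b \<notin> \<Omega>" using fr[OF assms(10)] .
  have "{b, y} = {x0, y0}" using xy(2) y(2) by simp
  then have "y = x0" using x0O bO by (auto simp: doubleton_eq_iff)
  define a where "a = x0"
  have aA: "a \<in> A" and aO: "a \<in> \<Omega>" and Lab: "L = closed_segment b a" and ab: "a \<noteq> b"
    using xy x0O y \<open>y = x0\<close> by (auto simp: a_def)
  have Lba: "L = closed_segment a b" using Lab closed_segment_commute by blast
  have AO: "\<And>p. p \<in> A \<Longrightarrow> p \<in> \<Omega>" using assms(7) by auto
  have key0: "\<exists>c \<in> frontier \<Omega>. dist a b \<le> dist a c \<and> (\<forall>z\<in>frontier \<Omega>. dist a c \<le> dist a z)"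
  proof -
    obtain c where c: "c \<in> frontier \<Omega>" "\<And>z. z \<in> frontier \<Omega> \<Longrightarrow> dist a c \<le> dist a z"
      using distance_attains_inf[of "frontier \<Omega>" a] assms(10) by blast
    have "dist a b \<le> dist a c"
    proof (rule ccontr)
      assume lt: "\<not> dist a b \<le> dist a c"
      have cO: "c \<notin> \<Omega>" using fr c by auto
      have ac: "a \<noteq> c" using aO cO by auto
      have cb: "c \<noteq> b" using lt by auto
      have seg: "closed_segment a c \<subseteq> closure \<Omega>"
      proof
        fix p assume p: "p \<in> closed_segment a c"
        show "p \<in> closure \<Omega>"
        proof (cases "p = c \<or> p = a")
          case True
          then show ?thesis using c(1) aO frontier_def closure_subset
            by (metis DiffD1 subsetD)
        next
          case False
          then have "p \<in> open_segment a c" using p by (auto simp: open_segment_def)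
          then have pa: "dist p a < dist a c" using dist_in_open_segment by blast
          have noF: "closed_segment a p \<inter> frontier \<Omega> = {}"
          proof (rule ccontr)
            assume "closed_segment a p \<inter> frontier \<Omega> \<noteq> {}"
            then obtain q where q: "q \<in> closed_segment a p" "q \<in> frontier \<Omega>" by blast
            have "dist q a \<le> dist a p" using dist_in_closed_segment[OF q(1)] by blast
            moreover have "dist a c \<le> dist a q" using c(2) q(2) by blast
            ultimately show False using pa by (simp add: dist_commute)
          qed
          have "closed_segment a p - \<Omega> = {}"
          proof (rule ccontr)
            assume "closed_segment a p - \<Omega> \<noteq> {}"
            moreover have "closed_segment a p \<inter> \<Omega> \<noteq> {}" using aO by auto
            ultimately have "closed_segment a p \<inter> frontier \<Omega> \<noteq> {}"
              using connected_Int_frontier[OF connected_segment] by blast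
            then show False using noF by blast
          qed
          then have "p \<in> \<Omega>" by auto
          then show ?thesis using closure_subset by blast
        qed
      qed
      define L' where "L' = closed_segment a c"
      have LL': "L' \<noteq> L" unfolding L'_def Lba using ac cb ab by (auto simp: doubleton_eq_iff)
      have endL: "\<And>p. p \<in> A \<Longrightarrow> is_endpoint p L \<longleftrightarrow> p = a"
        unfolding Lba using endpoint_iff[OF ab] AO bO by blast
      have endL': "\<And>p. p \<in> A \<Longrightarrow> is_endpoint p L' \<longleftrightarrow> p = a"
        unfolding L'_def using endpoint_iff[OF ac] AO cO by blast
      have dL: "diameter L = dist a b" unfolding Lba by (rule diam_seg)
      have dL': "diameter L' = dist a c" unfolding L'_def by (rule diam_seg)
      have L'ok: "L' \<subseteq> closure \<Omega> \<and>
        (\<exists>x y. x \<noteq> y \<and> L' = closed_segment x y \<and> x \<in> A \<and> (y \<in> A \<or> y \<in> frontier \<Omega>))"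
        using seg ac aA c(1) unfolding L'_def by blast
      have Cok: "\<forall>M\<in>C. M \<subseteq> closure \<Omega> \<and>
        (\<exists>x y. x \<noteq> y \<and> M = closed_segment x y \<and> x \<in> A \<and> (y \<in> A \<or> y \<in> frontier \<Omega>))"
        using conn unfolding connection_def by (elim conjE)
      have oddC: "\<And>p. p \<in> A \<Longrightarrow> odd (card {M \<in> C. is_endpoint p M})"
        using conn unfolding connection_def by (elim conjE) (rule bspec)
      have LS: "L \<in> {M \<in> C. is_endpoint a M}" using assms(9) endL aA by auto
      have finS: "finite {M \<in> C. is_endpoint a M}" using finC by auto
      show False
      proof (cases "L' \<in> C")
        case True
        define C' where "C' = C - {L} - {L'}"
        have L'S: "L' \<in> {M \<in> C. is_endpoint a M}" using True endL' aA by auto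
        have "connection \<Omega> A C'"
          unfolding connection_def
        proof (intro conjI)
          show "finite C'" using finC by (simp add: C'_def)
        next
          show "\<forall>M\<in>C'. M \<subseteq> closure \<Omega> \<and>
            (\<exists>x y. x \<noteq> y \<and> M = closed_segment x y \<and> x \<in> A \<and> (y \<in> A \<or> y \<in> frontier \<Omega>))"
          proof
            fix M assume "M \<in> C'"
            then have "M \<in> C" by (simp add: C'_def)
            then show "M \<subseteq> closure \<Omega> \<and>
            (\<exists>x y. x \<noteq> y \<and> M = closed_segment x y \<and> x \<in> A \<and> (y \<in> A \<or> y \<in> frontier \<Omega>))" by (rule bspec[OF Cok])
          qed
        next
          show "\<forall>p\<in>A. odd (card {M \<in> C'. is_endpoint p M})"
          proof
          fix p assume pA: "p \<in> A"
          show "odd (card {M \<in> C'. is_endpoint p M})"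
          proof (cases "p = a")
            case True
            have eq: "{M \<in> C'. is_endpoint p M} = {M \<in> C. is_endpoint a M} - {L} - {L'}"
              using True by (auto simp: C'_def)
            have "card {L, L'} \<le> card {M \<in> C. is_endpoint a M}"
              using LS L'S finS by (intro card_mono) auto
            then have ge: "2 \<le> card {M \<in> C. is_endpoint a M}" using LL' by simp
            have "card ({M \<in> C. is_endpoint a M} - {L} - {L'}) = card {M \<in> C. is_endpoint a M} - 2"
              using LS L'S LL' finS by (simp add: card_Diff_singleton)
            then show ?thesis using eq ge oddC[OF aA] by (simp add: even_diff_nat)
          next
            case False
            have "{M \<in> C'. is_endpoint p M} = {M \<in> C. is_endpoint p M}"
              using False endL endL' pA by (auto simp: C'_def)
            then show ?thesis using oddC pA by simp
          qed
          qed
        qed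
        then have "conn_length C \<le> conn_length C'" by (rule minC)
        moreover have "conn_length C' = conn_length C - diameter L - diameter L'"
          unfolding conn_length_def C'_def using finC True assms(9) LL'
          by (simp add: sum_diff1)
        moreover have "0 < dist a b" "0 < dist a c" using ab ac by auto
        ultimately show False using dL dL' by simp
      next
        case False
        define C' where "C' = insert L' (C - {L})"
        have "connection \<Omega> A C'"
          unfolding connection_def
        proof (intro conjI)
          show "finite C'" using finC by (simp add: C'_def)
        next
          show "\<forall>M\<in>C'. M \<subseteq> closure \<Omega> \<and>
            (\<exists>x y. x \<noteq> y \<and> M = closed_segment x y \<and> x \<in> A \<and> (y \<in> A \<or> y \<in> frontier \<Omega>))"
          proof
            fix M assume "M \<in> C'"
            then have "M \<in> C \<or> M = L'" by (auto simp: C'_def)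
            then show "M \<subseteq> closure \<Omega> \<and>
            (\<exists>x y. x \<noteq> y \<and> M = closed_segment x y \<and> x \<in> A \<and> (y \<in> A \<or> y \<in> frontier \<Omega>))" using Cok L'ok by blast
          qed
        next
          show "\<forall>p\<in>A. odd (card {M \<in> C'. is_endpoint p M})"
          proof
          fix p assume pA: "p \<in> A"
          show "odd (card {M \<in> C'. is_endpoint p M})"
          proof (cases "p = a")
            case True
            have eq: "{M \<in> C'. is_endpoint p M} = insert L' ({M \<in> C. is_endpoint a M} - {L})"
              using True endL' aA by (auto simp: C'_def)
            have "card (insert L' ({M \<in> C. is_endpoint a M} - {L})) = card {M \<in> C. is_endpoint a M}"
            proof -
              have "card {M \<in> C. is_endpoint a M} > 0" using LS finS card_gt_0_iff by blast
              then show ?thesis using LS False finS by (simp add: card_Diff_singleton)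
            qed
            then show ?thesis using eq oddC[OF aA] by simp
          next
            case False
            have "{M \<in> C'. is_endpoint p M} = {M \<in> C. is_endpoint p M}"
              using False endL endL' pA by (auto simp: C'_def)
            then show ?thesis using oddC pA by simp
          qed
          qed
        qed
        then have "conn_length C \<le> conn_length C'" by (rule minC)
        moreover have "conn_length C' = diameter L' + (conn_length C - diameter L)"
          unfolding conn_length_def C'_def using finC False assms(9)
          by (simp add: sum_diff1)
        ultimately show False using dL dL' lt by simp
      qed
    qed
    then show ?thesis using c by blast
  qed
  have key: "\<And>z. z \<in> frontier \<Omega> \<Longrightarrow> dist a b \<le> dist a z"
    using key0 by (meson order_trans)
  have "orthogonal_to_boundary_at \<Omega> b a"
    unfolding orthogonal_to_boundary_at_def
  proof (intro allI impI)
    fix \<gamma> :: "real \<Rightarrow> real^2" and v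
    assume g0: "\<gamma> 0 = b" and ev: "\<forall>\<^sub>F t in nhds 0. \<gamma> t \<in> frontier \<Omega>"
      and gd: "(\<gamma> has_vector_derivative v) (at 0)"
    obtain d where d: "d > 0" "\<And>t. dist t 0 < d \<Longrightarrow> \<gamma> t \<in> frontier \<Omega>"
      using ev unfolding eventually_nhds_metric by blast
    have D: "((\<lambda>t. (a - \<gamma> t) \<bullet> (a - \<gamma> t)) has_real_derivative (- 2 * ((a - \<gamma> 0) \<bullet> v))) (at 0)"
      by (rule deriv_sq[OF gd])
    have mn: "\<forall>t. \<bar>0 - t\<bar> < d \<longrightarrow> (a - \<gamma> 0) \<bullet> (a - \<gamma> 0) \<le> (a - \<gamma> t) \<bullet> (a - \<gamma> t)"
    proof (intro allI impI)
      fix t :: real assume "\<bar>0 - t\<bar> < d"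
      then have "\<gamma> t \<in> frontier \<Omega>" using d(2) by (simp add: dist_real_def)
      then have "dist a b \<le> dist a (\<gamma> t)" by (rule key)
      then have "norm (a - \<gamma> 0) \<le> norm (a - \<gamma> t)" using g0 by (simp add: dist_norm)
      then have "norm (a - \<gamma> 0) ^ 2 \<le> norm (a - \<gamma> t) ^ 2" by (simp add: power_mono)
      then show "(a - \<gamma> 0) \<bullet> (a - \<gamma> 0) \<le> (a - \<gamma> t) \<bullet> (a - \<gamma> t)"
        by (simp add: power2_norm_eq_inner)
    qed
    have "- 2 * ((a - \<gamma> 0) \<bullet> v) = 0" by (rule DERIV_local_min[OF D d(1) mn])
    then show "(a - b) \<bullet> v = 0" using g0 by simp
  qed
  then show ?thesis using ab Lab by blast
qed

end
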